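(* Let $T=(V,E)$ be a simple graph and let $S=(U,F)$ be a subgraph of $T$ which is a tree. Suppose $T'=(V',E')$ is formed from $T$ by a $1$-dimensional $|F|$-extension which deletes exactly the edges in $F$ and appends a new vertex $v$ incident to $|F|+1$ new edges. Then $T$ is a tree if and only if $T'$ is a tree.
   Context: All graphs are finite and loop-free; multi-graphs may have parallel edges. For a multi-graph $G$ and integers $d\ge 1$, $j\ge 0$, a $d$-dimensional $j$-extension of $G$ forms a new multi-graph $G'$ by deleting a set $F$ of $j$ edges of $G$ and then adding a new vertex $v$ together with $d+j$ new edges joining $v$ to vertices of $G$ (parallel new edges are allowed), in such a way that every endpoint of an edge of $F$ is a neighbour of $v$ in $G'$. (For $d=1$ arbitrary $j\ge 0$ is allowed.) *)

theory Defs
  imports Main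
begin

text \<open>A multigraph is given by a vertex set V, a set E of edge identifiers and an
  endpoint map g assigning to each edge its two-element set of endpoints (loop-free;
  parallel edges are distinct identifiers with the same endpoint set).\<close>

definition multigraph :: "'a set \<Rightarrow> 'e set \<Rightarrow> ('e \<Rightarrow> 'a set) \<Rightarrow> bool" where
  "multigraph V E g \<longleftrightarrow> finite V \<and> finite E \<and> (\<forall>e\<in>E. g e \<subseteq> V \<and> card (g e) = 2)"

definition simple_graph :: "'a set \<Rightarrow> 'e set \<Rightarrow> ('e \<Rightarrow> 'a set) \<Rightarrow> bool" where
  "simple_graph V E g \<longleftrightarrow> multigraph V E g \<and> inj_on g E"

definition adj_rel :: "'e set \<Rightarrow> ('e \<Rightarrow> 'a set) \<Rightarrow> ('a \<times> 'a) set" where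
  "adj_rel E g = {(x, y). \<exists>e\<in>E. g e = {x, y}}"

definition connected_graph :: "'a set \<Rightarrow> 'e set \<Rightarrow> ('e \<Rightarrow> 'a set) \<Rightarrow> bool" where
  "connected_graph V E g \<longleftrightarrow> V \<noteq> {} \<and> (\<forall>x\<in>V. \<forall>y\<in>V. (x, y) \<in> (adj_rel E g)\<^sup>*)"

text \<open>A cycle: distinct vertices v_0..v_{k-1} and distinct edges e_0..e_{k-1} (k \<ge> 2)
  with e_i joining v_i and v_{i+1 mod k}. For k = 2 this is a pair of parallel edges.\<close>

definition has_cycle :: "'a set \<Rightarrow> 'e set \<Rightarrow> ('e \<Rightarrow> 'a set) \<Rightarrow> bool" where
  "has_cycle V E g \<longleftrightarrow> (\<exists>vs es. length vs = length es \<and> 2 \<le> length vs \<and>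
      distinct vs \<and> distinct es \<and> set vs \<subseteq> V \<and> set es \<subseteq> E \<and>
      (\<forall>i<length vs. g (es ! i) = {vs ! i, vs ! ((i + 1) mod length vs)}))"

definition is_tree :: "'a set \<Rightarrow> 'e set \<Rightarrow> ('e \<Rightarrow> 'a set) \<Rightarrow> bool" where
  "is_tree V E g \<longleftrightarrow> multigraph V E g \<and> connected_graph V E g \<and> \<not> has_cycle V E g"

definition subgraph :: "'a set \<Rightarrow> 'e set \<Rightarrow> 'a set \<Rightarrow> 'e set \<Rightarrow> ('e \<Rightarrow> 'a set) \<Rightarrow> bool" where
  "subgraph U F V E g \<longleftrightarrow> U \<subseteq> V \<and> F \<subseteq> E \<and> (\<forall>e\<in>F. g e \<subseteq> U)"

definition extension ::
  "nat \<Rightarrow> nat \<Rightarrow> 'a set \<Rightarrow> 'e set \<Rightarrow> ('e \<Rightarrow> 'a set) \<Rightarrow> 'e set \<Rightarrow> 'a \<Rightarrow>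
   'a set \<Rightarrow> 'e set \<Rightarrow> ('e \<Rightarrow> 'a set) \<Rightarrow> bool" where
  "extension d j V E g F v V' E' g' \<longleftrightarrow>
     multigraph V E g \<and> F \<subseteq> E \<and> card F = j \<and> v \<notin> V \<and> V' = insert v V \<and>
     E - F \<subseteq> E' \<and> finite E' \<and> card (E' - (E - F)) = d + j \<and>
     (\<forall>e\<in>E - F. g' e = g e) \<and>
     (\<forall>e\<in>E' - (E - F). \<exists>u\<in>V. g' e = {v, u}) \<and>
     (\<forall>e\<in>F. \<forall>x\<in>g e. \<exists>n\<in>E' - (E - F). g' n = {v, x})"

end

theory Submission
  imports Defs
begin

lemma adj_sym: "sym (adj_rel E g)"
proof (rule symI)
  fix x y assume "(x,y) \<in> adj_rel E g"
  then obtain e where "e \<in> E" "g e = {x,y}" unfolding adj_rel_def by blast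
  moreover have "{x,y} = {y,x}" by (rule insert_commute)
  ultimately show "(y,x) \<in> adj_rel E g" unfolding adj_rel_def by auto
qed

lemma rtr_sym: "(x,y) \<in> (adj_rel E g)\<^sup>* \<Longrightarrow> (y,x) \<in> (adj_rel E g)\<^sup>*"
  by (rule symD[OF sym_rtrancl[OF adj_sym]])

lemma adj_mono: "E1 \<subseteq> E2 \<Longrightarrow> adj_rel E1 g \<subseteq> adj_rel E2 g"
  unfolding adj_rel_def by blast

lemma adj_in_V: "multigraph V E g \<Longrightarrow> (x,y) \<in> adj_rel E g \<Longrightarrow> x \<in> V \<and> y \<in> V"
proof -
  assume m: "multigraph V E g" and "(x,y) \<in> adj_rel E g"
  then obtain e where "e \<in> E" "g e = {x,y}" unfolding adj_rel_def by blast
  moreover have "g e \<subseteq> V" if "e \<in> E" for e using m that unfolding multigraph_def by blast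
  ultimately show ?thesis by blast
qed

lemma rtrancl_distinct_path:
  "(a,b) \<in> R\<^sup>* \<Longrightarrow> \<exists>ws. ws \<noteq> [] \<and> hd ws = a \<and> last ws = b \<and> distinct ws \<and>
      (\<forall>i. Suc i < length ws \<longrightarrow> (ws!i, ws!Suc i) \<in> R)"
proof (induction rule: rtrancl_induct)
  case base
  have "[a] \<noteq> [] \<and> hd [a] = a \<and> last [a] = a \<and> distinct [a] \<and>
      (\<forall>i. Suc i < length [a] \<longrightarrow> ([a]!i, [a]!Suc i) \<in> R)" by simp
  then show ?case by (rule exI)
next
  case (step c b)
  then obtain ws where ws: "ws \<noteq> []" "hd ws = a" "last ws = c" "distinct ws"
    and ws5: "\<And>i. Suc i < length ws \<Longrightarrow> (ws!i, ws!Suc i) \<in> R" by blast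
  show ?case
  proof (cases "b \<in> set ws")
    case True
    then obtain k where k: "k < length ws" "ws!k = b" by (auto simp: in_set_conv_nth)
    define w where "w = take (Suc k) ws"
    have w1: "w \<noteq> []" using ws(1) w_def by simp
    have w2: "hd w = a" using ws(1,2) w_def by (simp add: hd_take)
    have w3: "last w = b" using k w_def
      by (simp add: take_Suc_conv_app_nth)
    have w4: "distinct w" using ws(4) w_def by simp
    have w5: "\<forall>i. Suc i < length w \<longrightarrow> (w!i, w!Suc i) \<in> R"
    proof (intro allI impI)
      fix i assume "Suc i < length w"
      then have i1: "Suc i < length ws" and i2: "Suc i < Suc k" using w_def by auto
      have "w!i = ws!i" "w!Suc i = ws!Suc i" using i2 w_def by simp_all
      then show "(w!i, w!Suc i) \<in> R" using ws5[OF i1] by simp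
    qed
    have "w \<noteq> [] \<and> hd w = a \<and> last w = b \<and> distinct w \<and>
      (\<forall>i. Suc i < length w \<longrightarrow> (w!i, w!Suc i) \<in> R)" using w1 w2 w3 w4 w5 by blast
    then show ?thesis by (rule exI)
  next
    case False
    define w where "w = ws @ [b]"
    have w1: "w \<noteq> []" using w_def by simp
    have w2: "hd w = a" using ws(1,2) w_def by simp
    have w3: "last w = b" using w_def by simp
    have w4: "distinct w" using ws(4) False w_def by simp
    have w5: "\<forall>i. Suc i < length w \<longrightarrow> (w!i, w!Suc i) \<in> R"
    proof (intro allI impI)
      fix i assume i: "Suc i < length w"
      show "(w!i, w!Suc i) \<in> R"
      proof (cases "Suc i < length ws")
        case True
        then have "w!i = ws!i" "w!Suc i = ws!Suc i" using w_def by (simp_all add: nth_append)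
        then show ?thesis using ws5[OF True] by simp
      next
        case False
        then have il: "Suc i = length ws" using i w_def by auto
        have "ws ! i = c" using ws(1,3) il by (metis diff_Suc_1 last_conv_nth)
        then have "w!i = c" using il w_def by (simp add: nth_append)
        moreover have "w!Suc i = b" using il w_def by (metis nth_append_length)
        ultimately show ?thesis using step(2) by simp
      qed
    qed
    have "w \<noteq> [] \<and> hd w = a \<and> last w = b \<and> distinct w \<and>
      (\<forall>i. Suc i < length w \<longrightarrow> (w!i, w!Suc i) \<in> R)" using w1 w2 w3 w4 w5 by blast
    then show ?thesis by (rule exI)
  qed
qed

lemma edge_cycle:
  assumes mg: "multigraph V E g" and eE: "e \<in> E" and ge: "g e = {a,b}" and ab: "a \<noteq> b"
    and p: "(a,b) \<in> (adj_rel (E - {e}) g)\<^sup>*"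
  shows "has_cycle V E g"
proof -
  let ?R = "adj_rel (E - {e}) g"
  obtain ws where ws: "ws \<noteq> []" "hd ws = a" "last ws = b" "distinct ws"
    "\<forall>i. Suc i < length ws \<longrightarrow> (ws!i, ws!Suc i) \<in> ?R"
    using rtrancl_distinct_path[OF p] by blast
  define m where "m = length ws"
  have m2: "2 \<le> m"
  proof (rule ccontr)
    assume "\<not> 2 \<le> m"
    moreover have "m \<noteq> 0" using ws(1) m_def by simp
    ultimately have "m = 1" by simp
    then have "hd ws = last ws" using ws(1) m_def by (cases ws) auto
    then show False using ws(2,3) ab by simp
  qed
  have w0: "ws!0 = a" using ws(1,2) by (simp add: hd_conv_nth)
  have wl: "ws!(m-1) = b" using ws(1,3) m_def by (simp add: last_conv_nth)
  define fs where "fs = map (\<lambda>i. SOME f. f \<in> E - {e} \<and> g f = {ws!i, ws!Suc i}) [0..<m-1]"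
  have lfs: "length fs = m - 1" by (simp add: fs_def)
  have fsp: "fs!i \<in> E - {e} \<and> g (fs!i) = {ws!i, ws!Suc i}" if "i < m - 1" for i
  proof -
    have "(ws!i, ws!Suc i) \<in> ?R" using ws(5) that m_def by simp
    then have "\<exists>f. f \<in> E - {e} \<and> g f = {ws!i, ws!Suc i}" unfolding adj_rel_def by blast
    then have "(SOME f. f \<in> E - {e} \<and> g f = {ws!i, ws!Suc i}) \<in> E - {e} \<and>
       g (SOME f. f \<in> E - {e} \<and> g f = {ws!i, ws!Suc i}) = {ws!i, ws!Suc i}"
      by (rule someI_ex)
    moreover have "fs!i = (SOME f. f \<in> E - {e} \<and> g f = {ws!i, ws!Suc i})"
      using that by (simp add: fs_def)
    ultimately show ?thesis by simp
  qed
  have dfs: "distinct fs"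
  proof (subst distinct_conv_nth, intro allI impI)
    fix i j assume i: "i < length fs" and j: "j < length fs" and ij: "i \<noteq> j"
    show "fs!i \<noteq> fs!j"
    proof
      assume "fs!i = fs!j"
      then have eq: "{ws!i, ws!Suc i} = {ws!j, ws!Suc j}" using fsp i j lfs by metis
      have im: "i < m" "Suc i < m" "j < m" "Suc j < m" using i j lfs by auto
      have "ws!i = ws!j \<or> ws!i = ws!Suc j" using eq by blast
      then have "i = Suc j" using ij im ws(4) m_def by (auto simp: nth_eq_iff_index_eq)
      moreover have "ws!j = ws!i \<or> ws!j = ws!Suc i" using eq by blast
      then have "j = Suc i" using ij im ws(4) m_def by (auto simp: nth_eq_iff_index_eq)
      ultimately show False by simp
    qed
  qed
  have enf: "e \<notin> set fs"
  proof
    assume "e \<in> set fs"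
    then obtain i where "i < length fs" "fs!i = e" by (auto simp: in_set_conv_nth)
    then show False using fsp lfs by auto
  qed
  show ?thesis unfolding has_cycle_def
  proof (intro exI[of _ ws] exI[of _ "fs @ [e]"] conjI)
    show "length ws = length (fs @ [e])" using lfs m_def m2 by simp
    show "2 \<le> length ws" using m2 m_def by simp
    show "distinct ws" by fact
    show "distinct (fs @ [e])" using dfs enf by simp
    show "set ws \<subseteq> V"
    proof
      fix x assume "x \<in> set ws"
      then obtain i where i: "i < m" "ws!i = x" by (auto simp: in_set_conv_nth m_def)
      show "x \<in> V"
      proof (cases "Suc i < m")
        case True
        then have "(ws!i, ws!Suc i) \<in> adj_rel E g"
          using ws(5) m_def adj_mono[of "E - {e}" E g] by auto
        then show ?thesis using adj_in_V[OF mg] i by blast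
      next
        case False
        then have "i = m - 1" using i by simp
        then have "x = b" using wl i by simp
        then show ?thesis using mg eE ge unfolding multigraph_def by auto
      qed
    qed
    show "set (fs @ [e]) \<subseteq> E"
    proof
      fix f assume "f \<in> set (fs @ [e])"
      then have "f = e \<or> f \<in> set fs" by auto
      then show "f \<in> E"
      proof
        assume "f \<in> set fs"
        then obtain i where "i < length fs" "fs!i = f" by (auto simp: in_set_conv_nth)
        then show "f \<in> E" using fsp lfs by auto
      qed (use eE in auto)
    qed
    show "\<forall>i<length ws. g ((fs @ [e]) ! i) = {ws ! i, ws ! ((i + 1) mod length ws)}"
    proof (intro allI impI)
      fix i assume i: "i < length ws"
      show "g ((fs @ [e]) ! i) = {ws ! i, ws ! ((i + 1) mod length ws)}"
      proof (cases "i < m - 1")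
        case True
        then have "(fs @ [e]) ! i = fs ! i" using lfs by (simp add: nth_append)
        moreover have "(i + 1) mod length ws = Suc i" using True m_def by simp
        ultimately show ?thesis using fsp[OF True] by simp
      next
        case False
        then have im: "i = m - 1" using i m_def by simp
        then have "(fs @ [e]) ! i = e" using lfs by (simp add: nth_append)
        moreover have "i + 1 = length ws" using im m_def m2 by simp
        then have "(i + 1) mod length ws = 0" by simp
        ultimately show ?thesis using ge w0 wl im by auto
      qed
    qed
  qed
qed

lemma cycle_edge:
  assumes "has_cycle V E g"
  shows "\<exists>e\<in>E. \<exists>a b. g e = {a,b} \<and> (a,b) \<in> (adj_rel (E - {e}) g)\<^sup>*"
proof -
  obtain vs es where c: "length vs = length es" "2 \<le> length vs" "distinct vs" "distinct es"
    "set vs \<subseteq> V" "set es \<subseteq> E"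
    "\<forall>i<length vs. g (es ! i) = {vs ! i, vs ! ((i + 1) mod length vs)}"
    using assms unfolding has_cycle_def by blast
  define k where "k = length vs"
  define e where "e = es ! (k - 1)"
  have eE: "e \<in> E" using c k_def e_def by auto
  have ge: "g e = {vs ! (k-1), vs ! 0}"
  proof -
    have "(k - 1) + 1 = k" using c(2) k_def by simp
    then have "((k - 1) + 1) mod k = 0" by simp
    moreover have "k - 1 < length vs" using c(2) k_def by simp
    ultimately show ?thesis using c(7) k_def e_def by metis
  qed
  have "\<forall>i. i < k \<longrightarrow> (vs ! 0, vs ! i) \<in> (adj_rel (E - {e}) g)\<^sup>*"
  proof (intro allI)
    fix i show "i < k \<longrightarrow> (vs ! 0, vs ! i) \<in> (adj_rel (E - {e}) g)\<^sup>*"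
    proof (induction i)
      case 0 then show ?case by simp
    next
      case (Suc i)
      show ?case
      proof
        assume si: "Suc i < k"
        then have ih: "(vs ! 0, vs ! i) \<in> (adj_rel (E - {e}) g)\<^sup>*" using Suc by simp
        have "es ! i \<noteq> e" using c(4) c(1) si k_def e_def by (simp add: nth_eq_iff_index_eq)
        moreover have "es ! i \<in> E" using c(6) c(1) si k_def by auto
        moreover have "g (es ! i) = {vs ! i, vs ! Suc i}" using c(7) si k_def by auto
        ultimately have "(vs ! i, vs ! Suc i) \<in> adj_rel (E - {e}) g"
          unfolding adj_rel_def by blast
        then show "(vs ! 0, vs ! Suc i) \<in> (adj_rel (E - {e}) g)\<^sup>*" using ih by simp
      qed
    qed
  qed
  then have "(vs ! 0, vs ! (k-1)) \<in> (adj_rel (E - {e}) g)\<^sup>*" using c(2) k_def by simp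
  then have "(vs ! (k-1), vs ! 0) \<in> (adj_rel (E - {e}) g)\<^sup>*" by (rule rtr_sym)
  then show ?thesis using eE ge by blast
qed


lemma parent_struct:
  assumes mg: "multigraph V E g" and c: "connected_graph V E g"
  obtains r pe where "r \<in> V" "inj_on pe (V - {r})" "pe ` (V - {r}) \<subseteq> E"
    "\<forall>y\<in>V. (r,y) \<in> (adj_rel (pe ` (V - {r})) g)\<^sup>*"
proof -
  let ?R = "adj_rel E g"
  obtain r where r: "r \<in> V" using c unfolding connected_graph_def by blast
  define d where "d y = (LEAST n. (r,y) \<in> ?R ^^ n)" for y
  have dR: "(r,y) \<in> ?R ^^ (d y) \<and> d y \<le> n" if "(r,y) \<in> ?R ^^ n" for y n
    unfolding d_def using that by (metis (mono_tags, lifting) LeastI Least_le)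
  have reach: "\<exists>n. (r,y) \<in> ?R ^^ n" if "y \<in> V" for y
    using c r that unfolding connected_graph_def by (meson rtrancl_power)
  have par: "\<exists>e. e \<in> E \<and> (\<exists>p. g e = {p,y} \<and> Suc (d p) = d y)" if y: "y \<in> V" "y \<noteq> r" for y
  proof -
    obtain n where "(r,y) \<in> ?R ^^ n" using reach y by blast
    then have ry: "(r,y) \<in> ?R ^^ (d y)" using dR by blast
    have "d y \<noteq> 0"
    proof
      assume "d y = 0" then show False using ry y by simp
    qed
    then obtain m where m: "d y = Suc m" by (cases "d y") auto
    then have "(r,y) \<in> ?R ^^ m O ?R" using ry by (simp add: relpow.simps(2))
    then obtain p where p1: "(r,p) \<in> ?R ^^ m" and p2: "(p,y) \<in> ?R" by blast
    have dp: "d p \<le> m" "(r,p) \<in> ?R ^^ (d p)" using dR[OF p1] by auto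
    have "(r,y) \<in> ?R ^^ Suc (d p)" using dp(2) p2 by (auto simp: relpow.simps(2))
    then have "d y \<le> Suc (d p)" using dR by blast
    then have "Suc (d p) = d y" using m dp(1) by simp
    moreover obtain e where "e \<in> E" "g e = {p,y}" using p2 unfolding adj_rel_def by blast
    ultimately show ?thesis by blast
  qed
  define pe where "pe y = (SOME e. e \<in> E \<and> (\<exists>p. g e = {p,y} \<and> Suc (d p) = d y))" for y
  have pe: "pe y \<in> E \<and> (\<exists>p. g (pe y) = {p,y} \<and> Suc (d p) = d y)" if "y \<in> V" "y \<noteq> r" for y
    unfolding pe_def using someI_ex[OF par[OF that]] .
  have inj: "inj_on pe (V - {r})"
  proof (rule inj_onI)
    fix y1 y2 assume y1: "y1 \<in> V - {r}" and y2: "y2 \<in> V - {r}" and eq: "pe y1 = pe y2"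
    obtain p1 where p1: "g (pe y1) = {p1,y1}" "Suc (d p1) = d y1" using pe y1 by blast
    obtain p2 where p2: "g (pe y2) = {p2,y2}" "Suc (d p2) = d y2" using pe y2 by blast
    show "y1 = y2"
    proof (rule ccontr)
      assume ne: "y1 \<noteq> y2"
      have "{p1,y1} = {p2,y2}" using p1 p2 eq by simp
      then have "y1 = p2" "y2 = p1" using ne by (auto simp: doubleton_eq_iff)
      then show False using p1(2) p2(2) by simp
    qed
  qed
  have sub: "pe ` (V - {r}) \<subseteq> E" using pe by blast
  have conn: "\<forall>y\<in>V. d y = n \<longrightarrow> (r,y) \<in> (adj_rel (pe ` (V - {r})) g)\<^sup>*" for n
  proof (induction n rule: less_induct)
    case (less n)
    show ?case
    proof (intro ballI impI)
      fix y assume y: "y \<in> V" and dy: "d y = n"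
      show "(r,y) \<in> (adj_rel (pe ` (V - {r})) g)\<^sup>*"
      proof (cases "y = r")
        case True then show ?thesis by simp
      next
        case False
        obtain p where p: "g (pe y) = {p,y}" "Suc (d p) = d y" using pe y False by blast
        have "pe y \<in> E" using pe y False by blast
        then have pV: "p \<in> V" using mg p(1) unfolding multigraph_def by auto
        have "(r,p) \<in> (adj_rel (pe ` (V - {r})) g)\<^sup>*" using less p(2) dy pV by auto
        moreover have "(p,y) \<in> adj_rel (pe ` (V - {r})) g"
          unfolding adj_rel_def using p(1) y False by blast
        ultimately show ?thesis by simp
      qed
    qed
  qed
  show ?thesis using that[OF r inj sub] conn by blast
qed

lemma conn_card_le:
  assumes mg: "multigraph V E g" and c: "connected_graph V E g"
  shows "card V \<le> card E + 1"
proof -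
  obtain r pe where r: "r \<in> V" "inj_on pe (V - {r})" "pe ` (V - {r}) \<subseteq> E"
    using parent_struct[OF mg c] by metis
  have fin: "finite V" "finite E" using mg unfolding multigraph_def by auto
  have "card (V - {r}) \<le> card E" using card_inj_on_le[OF r(2) r(3) fin(2)] .
  moreover have "card (V - {r}) = card V - 1" using r(1) fin by simp
  moreover have "card V \<ge> 1" using r(1) fin by (metis card_0_eq empty_iff less_one not_le)
  ultimately show ?thesis by simp
qed

lemma acyc_card_ge:
  assumes mg: "multigraph V E g" and c: "connected_graph V E g" and nc: "\<not> has_cycle V E g"
  shows "card E + 1 \<le> card V"
proof -
  obtain r pe where r: "r \<in> V" "inj_on pe (V - {r})" "pe ` (V - {r}) \<subseteq> E"
    "\<forall>y\<in>V. (r,y) \<in> (adj_rel (pe ` (V - {r})) g)\<^sup>*"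
    using parent_struct[OF mg c] by metis
  let ?P = "pe ` (V - {r})"
  have fin: "finite V" "finite E" using mg unfolding multigraph_def by auto
  have EP: "E \<subseteq> ?P"
  proof
    fix e assume eE: "e \<in> E"
    show "e \<in> ?P"
    proof (rule ccontr)
      assume nP: "e \<notin> ?P"
      have "card (g e) = 2" "g e \<subseteq> V" using mg eE unfolding multigraph_def by auto
      then obtain a b where ab: "g e = {a,b}" "a \<noteq> b" "a \<in> V" "b \<in> V"
        by (metis card_2_iff insert_subset)
      have PE: "?P \<subseteq> E - {e}" using r(3) nP by blast
      have "(r,a) \<in> (adj_rel (E - {e}) g)\<^sup>*" "(r,b) \<in> (adj_rel (E - {e}) g)\<^sup>*"
        using r(4) ab rtrancl_mono[OF adj_mono[OF PE]] by auto
      then have "(a,b) \<in> (adj_rel (E - {e}) g)\<^sup>*" using rtr_sym rtrancl_trans by metis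
      then show False using edge_cycle[OF mg eE ab(1,2)] nc by simp
    qed
  qed
  have "card E \<le> card ?P" using card_mono[OF _ EP] fin by simp
  also have "\<dots> = card (V - {r})" using card_image[OF r(2)] .
  also have "\<dots> = card V - 1" using r(1) fin by simp
  finally show ?thesis using r(1) fin by (metis Suc_eq_plus1 Suc_pred' card_gt_0_iff empty_iff le_SucI not_less_eq_eq)
qed

lemma cyc_card:
  assumes mg: "multigraph V E g" and c: "connected_graph V E g" and cy: "has_cycle V E g"
  shows "card V \<le> card E"
proof -
  obtain e a b where eE: "e \<in> E" and ge: "g e = {a,b}" and p: "(a,b) \<in> (adj_rel (E - {e}) g)\<^sup>*"
    using cycle_edge[OF cy] by blast
  have mg': "multigraph V (E - {e}) g" using mg unfolding multigraph_def by auto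
  have sub: "adj_rel E g \<subseteq> (adj_rel (E - {e}) g)\<^sup>*"
  proof (rule subrelI)
    fix x y assume "(x,y) \<in> adj_rel E g"
    then obtain f where f: "f \<in> E" "g f = {x,y}" unfolding adj_rel_def by blast
    show "(x,y) \<in> (adj_rel (E - {e}) g)\<^sup>*"
    proof (cases "f = e")
      case False
      then have "(x,y) \<in> adj_rel (E - {e}) g" using f unfolding adj_rel_def by blast
      then show ?thesis by simp
    next
      case True
      then have "{x,y} = {a,b}" using f ge by simp
      then have "(x = a \<and> y = b) \<or> (x = b \<and> y = a)" by (auto simp: doubleton_eq_iff)
      moreover have "(b,a) \<in> (adj_rel (E - {e}) g)\<^sup>*" using p by (rule rtr_sym)
      ultimately show ?thesis using p by auto
    qed
  qed
  have sub2: "(adj_rel E g)\<^sup>* \<subseteq> (adj_rel (E - {e}) g)\<^sup>*"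
    using rtrancl_subset_rtrancl[OF sub] .
  have "connected_graph V (E - {e}) g"
    using c sub2 unfolding connected_graph_def by auto
  then have "card V \<le> card (E - {e}) + 1" using conn_card_le[OF mg'] by simp
  moreover have "finite E" using mg unfolding multigraph_def by simp
  moreover have "card E \<ge> 1" using \<open>finite E\<close> eE by (metis One_nat_def Suc_leI card_gt_0_iff empty_iff)
  ultimately show ?thesis using eE by (simp add: card_Diff_singleton)
qed

lemma tree_iff:
  assumes mg: "multigraph V E g"
  shows "is_tree V E g \<longleftrightarrow> connected_graph V E g \<and> card E + 1 = card V"
proof
  assume t: "is_tree V E g"
  then have c: "connected_graph V E g" and nc: "\<not> has_cycle V E g" unfolding is_tree_def by auto
  have "card V \<le> card E + 1" using conn_card_le[OF mg c] .
  moreover have "card E + 1 \<le> card V" using acyc_card_ge[OF mg c nc] .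
  ultimately show "connected_graph V E g \<and> card E + 1 = card V" using c by simp
next
  assume a: "connected_graph V E g \<and> card E + 1 = card V"
  have "\<not> has_cycle V E g"
  proof
    assume "has_cycle V E g"
    then have "card V \<le> card E" using cyc_card[OF mg] a by blast
    then show False using a by simp
  qed
  then show "is_tree V E g" unfolding is_tree_def using mg a by blast
qed


theorem lemma3p1:
  fixes V U V' :: "'a set" and E F E' :: "'e set" and g g' :: "'e \<Rightarrow> 'a set" and v :: 'a
  assumes "simple_graph V E g"
    and "subgraph U F V E g"
    and "is_tree U F g"
    and "extension 1 (card F) V E g F v V' E' g'"
  shows "is_tree V E g \<longleftrightarrow> is_tree V' E' g'"
proof -
  define N where "N = E' - (E - F)"
  have mg: "multigraph V E g" and FE: "F \<subseteq> E" and vV: "v \<notin> V" and V': "V' = insert v V"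
    and EFE': "E - F \<subseteq> E'" and fE': "finite E'" and cN: "card N = 1 + card F"
    and old: "\<forall>e\<in>E-F. g' e = g e" and new: "\<forall>e\<in>N. \<exists>u\<in>V. g' e = {v,u}"
    and nb: "\<forall>e\<in>F. \<forall>x\<in>g e. \<exists>n\<in>N. g' n = {v,x}"
    using assms(4) unfolding extension_def N_def by auto
  have fin: "finite V" "finite E" using mg unfolding multigraph_def by auto
  have finN: "finite N" using fE' N_def by simp
  have UV: "U \<subseteq> V" and gFU: "\<forall>e\<in>F. g e \<subseteq> U" using assms(2) unfolding subgraph_def by auto
  have mgS: "multigraph U F g" and cS: "connected_graph U F g" and ncS: "\<not> has_cycle U F g"
    using assms(3) unfolding is_tree_def by auto
  have E'eq: "E' = (E - F) \<union> N" using EFE' N_def by auto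
  have cE': "card E' = card E + 1"
  proof -
    have "E - F \<subseteq> E" by blast
    then have "finite (E - F)" using fin(2) finite_subset by blast
    moreover have "(E - F) \<inter> N = {}" using N_def by blast
    ultimately have "card ((E - F) \<union> N) = card (E - F) + card N"
      using finN card_Un_disjoint by blast
    then have "card E' = card (E - F) + card N" using E'eq by simp
    moreover have "card (E - F) = card E - card F" using FE fin by (simp add: card_Diff_subset finite_subset)
    moreover have "card F \<le> card E" using FE fin by (simp add: card_mono)
    ultimately show ?thesis using cN by simp
  qed
  have cV': "card V' = card V + 1" using V' vV fin by simp
  have mg': "multigraph V' E' g'"
    unfolding multigraph_def
  proof (intro conjI)
    show "finite V'" using V' fin by simp
    show "finite E'" by fact
    show "\<forall>e\<in>E'. g' e \<subseteq> V' \<and> card (g' e) = 2"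
    proof
    fix e assume e: "e \<in> E'"
    show "g' e \<subseteq> V' \<and> card (g' e) = 2"
    proof (cases "e \<in> E - F")
      case True
      then show ?thesis using old mg V' unfolding multigraph_def by auto
    next
      case False
      then have "e \<in> N" using e N_def by simp
      then obtain u where "u \<in> V" "g' e = {v,u}" using new by blast
      moreover have "v \<noteq> u" using \<open>u \<in> V\<close> vV by auto
      ultimately show ?thesis using V' by auto
    qed
    qed
  qed
  have Nne: "N \<noteq> {}" using cN by auto
  then obtain n0 where n0: "n0 \<in> N" by blast
  then obtain u0 where u0: "u0 \<in> V" "g' n0 = {v,u0}" using new by blast
  let ?R = "adj_rel E g" and ?R' = "adj_rel E' g'"
  have conn: "connected_graph V E g \<longleftrightarrow> connected_graph V' E' g'"
  proof
    assume c: "connected_graph V E g"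
    have RR': "?R \<subseteq> ?R'\<^sup>*"
    proof (rule subrelI)
      fix a b assume "(a,b) \<in> ?R"
      then obtain e where e: "e \<in> E" "g e = {a,b}" unfolding adj_rel_def by blast
      show "(a,b) \<in> ?R'\<^sup>*"
      proof (cases "e \<in> F")
        case True
        obtain na where "na \<in> N" "g' na = {v,a}" using nb True e by blast
        then have 1: "(a,v) \<in> ?R'" unfolding adj_rel_def N_def by (auto simp: insert_commute)
        obtain nb' where "nb' \<in> N" "g' nb' = {v,b}" using nb True e by blast
        then have 2: "(v,b) \<in> ?R'" unfolding adj_rel_def N_def by auto
        show ?thesis using 1 2 by (meson r_into_rtrancl rtrancl_trans)
      next
        case False
        then have "e \<in> E'" "g' e = {a,b}" using e EFE' old by auto
        then have "(a,b) \<in> ?R'" unfolding adj_rel_def by blast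
        then show ?thesis by simp
      qed
    qed
    have vu0: "(v,u0) \<in> ?R'" using n0 u0 unfolding adj_rel_def N_def by auto
    have vx: "(v,x) \<in> ?R'\<^sup>*" if "x \<in> V" for x
    proof -
      have "(u0,x) \<in> ?R\<^sup>*" using c u0 that unfolding connected_graph_def by blast
      then have "(u0,x) \<in> ?R'\<^sup>*" using rtrancl_subset_rtrancl[OF RR'] by blast
      then show ?thesis using vu0 by simp
    qed
    show "connected_graph V' E' g'" unfolding connected_graph_def
    proof (intro conjI ballI)
      show "V' \<noteq> {}" using V' by simp
      fix x y assume x: "x \<in> V'" and y: "y \<in> V'"
      have "(v,x) \<in> ?R'\<^sup>*" using x V' vx by auto
      moreover have "(v,y) \<in> ?R'\<^sup>*" using y V' vx by auto
      ultimately show "(x,y) \<in> ?R'\<^sup>*" using rtr_sym rtrancl_trans by metis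
    qed
  next
    assume c': "connected_graph V' E' g'"
    have Nu: "(u0,u) \<in> ?R\<^sup>*" if n: "n \<in> N" "g' n = {v,u}" for n u
    proof (cases "F = {}")
      case True
      then have "card N = 1" using cN by simp
      then have "n = n0" using n n0 by (metis card_1_singletonE singletonD)
      then have "{v,u} = {v,u0}" using n u0 by simp
      then have "u = u0" using u0 vV by (auto simp: doubleton_eq_iff)
      then show ?thesis by simp
    next
      case False
      have endp: "\<exists>f\<in>F. x \<in> g f" if x: "x \<in> U" for x
      proof -
        obtain f0 where f0: "f0 \<in> F" using False by blast
        have "card (g f0) = 2" "g f0 \<subseteq> U" using mgS f0 unfolding multigraph_def by auto
        then obtain y where y: "y \<in> g f0" "y \<noteq> x" "y \<in> U"
          by (metis card_2_iff insert_subset insertCI)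
        have "(x,y) \<in> (adj_rel F g)\<^sup>*" using cS x y unfolding connected_graph_def by blast
        then obtain z where "(x,z) \<in> adj_rel F g" using y(2) by (metis converse_rtranclE)
        then show ?thesis unfolding adj_rel_def by blast
      qed
      have hx: "\<exists>n. n \<in> N \<and> g' n = {v,x}" if "x \<in> U" for x
        using endp[OF that] nb by blast
      define h where "h x = (SOME n. n \<in> N \<and> g' n = {v,x})" for x
      have h: "h x \<in> N \<and> g' (h x) = {v,x}" if "x \<in> U" for x
        unfolding h_def using someI_ex[OF hx[OF that]] .
      have inj: "inj_on h U"
      proof (rule inj_onI)
        fix x y assume "x \<in> U" "y \<in> U" "h x = h y"
        then have "{v,x} = {v,y}" "x \<noteq> v" "y \<noteq> v" using h UV vV by (metis, auto)
        then show "x = y" by (auto simp: doubleton_eq_iff)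
      qed
      have hU: "h ` U \<subseteq> N" using h by blast
      have "card F + 1 \<le> card U" using acyc_card_ge[OF mgS cS ncS] .
      then have "card N \<le> card (h ` U)" using cN card_image[OF inj] by simp
      then have hUN: "h ` U = N" using card_seteq[OF finN hU] by simp
      have inU: "w \<in> U" if mN: "m \<in> N" and gm: "g' m = {v,w}" for m w
      proof -
        obtain x where x: "x \<in> U" "m = h x" using hUN mN by blast
        then have "{v,w} = {v,x}" using h gm by simp
        moreover have "x \<noteq> v" using x UV vV by auto
        ultimately show ?thesis using x by (auto simp: doubleton_eq_iff)
      qed
      have "u \<in> U" "u0 \<in> U" using inU n n0 u0 by auto
      then have "(u0,u) \<in> (adj_rel F g)\<^sup>*" using cS unfolding connected_graph_def by blast
      then show ?thesis using rtrancl_mono[OF adj_mono[OF FE]] by blast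
    qed
    define \<phi> where "\<phi> x = (if x = v then u0 else x)" for x
    have phi: "(\<phi> x, \<phi> y) \<in> ?R\<^sup>*" if "(x,y) \<in> ?R'\<^sup>*" for x y
      using that
    proof (induction rule: rtrancl_induct)
      case base then show ?case by simp
    next
      case (step y z)
      obtain e where e: "e \<in> E'" "g' e = {y,z}" using step(2) unfolding adj_rel_def by blast
      have "(\<phi> y, \<phi> z) \<in> ?R\<^sup>*"
      proof (cases "e \<in> E - F")
        case True
        then have ge: "g e = {y,z}" "g e \<subseteq> V" using e old mg unfolding multigraph_def by auto
        then have "y \<noteq> v" "z \<noteq> v" using vV by auto
        then have "\<phi> y = y" "\<phi> z = z" unfolding \<phi>_def by auto
        moreover have "(y,z) \<in> ?R" using True ge unfolding adj_rel_def by blast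
        ultimately show ?thesis by simp
      next
        case False
        then have eN: "e \<in> N" using e N_def by simp
        then obtain u where u: "u \<in> V" "g' e = {v,u}" using new by blast
        have uv: "u \<noteq> v" using u vV by auto
        have "{y,z} = {v,u}" using e u by simp
        then have "(y = v \<and> z = u) \<or> (y = u \<and> z = v)" by (auto simp: doubleton_eq_iff)
        moreover have "(u0,u) \<in> ?R\<^sup>*" using Nu eN u by blast
        ultimately show ?thesis unfolding \<phi>_def using uv rtr_sym by auto
      qed
      then show ?case using step(3) by simp
    qed
    show "connected_graph V E g" unfolding connected_graph_def
    proof (intro conjI ballI)
      show "V \<noteq> {}" using u0 by blast
      fix x y assume x: "x \<in> V" and y: "y \<in> V"
      then have "(x,y) \<in> ?R'\<^sup>*" using c' V' unfolding connected_graph_def by blast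
      then have "(\<phi> x, \<phi> y) \<in> ?R\<^sup>*" by (rule phi)
      moreover have "\<phi> x = x" "\<phi> y = y" using x y vV unfolding \<phi>_def by auto
      ultimately show "(x,y) \<in> ?R\<^sup>*" by simp
    qed
  qed
  show ?thesis using tree_iff[OF mg] tree_iff[OF mg'] conn cV' cE' by auto
qed

end
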